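(* Let $R$ be a ring with identity and involution $*$, and let $a,b\in R$ with $aR=a^2R$. The following are equivalent: (1) $a$ is core invertible with $a^{\oplus}=b$; (2) $ba^2=a$, $(ab)^*=ab$ and $bR\subseteq aR$; (3) $a$ has a $\{1,3\}$-inverse, and $ba^2=a$ and $b=ba\hat a$ for some $\{1,3\}$-inverse $\hat a$ of $a$.
   Context: An involution on $R$ satisfies $(a^* )^*=a$, $(ab)^*=b^*a^*$, $(a+b)^*=a^*+b^*$. An element $x\in R$ is a core inverse of $a$ if $axa=a$, $xR=aR$ and $Rx=Ra^*$; it is unique when it exists and is denoted $a^{\oplus}$. An element $\hat a$ is a $\{1,3\}$-inverse of $a$ if $a\hat a a=a$ and $(a\hat a)^*=a\hat a$. $cR=\{cr: r\in R\}$. *)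

theory Defs
  imports Main
begin

definition involution :: "('a::ring_1 \<Rightarrow> 'a) \<Rightarrow> bool" where
  "involution s \<longleftrightarrow> (\<forall>a. s (s a) = a) \<and> (\<forall>a b. s (a * b) = s b * s a)
      \<and> (\<forall>a b. s (a + b) = s a + s b)"

definition rideal :: "'a::ring_1 \<Rightarrow> 'a set" where
  "rideal c = {c * r | r. True}"

definition lideal :: "'a::ring_1 \<Rightarrow> 'a set" where
  "lideal c = {r * c | r. True}"

definition core_inverse :: "('a::ring_1 \<Rightarrow> 'a) \<Rightarrow> 'a \<Rightarrow> 'a \<Rightarrow> bool" where
  "core_inverse s a x \<longleftrightarrow> a * x * a = a \<and> rideal x = rideal a \<and> lideal x = lideal (s a)"

definition core_invertible :: "('a::ring_1 \<Rightarrow> 'a) \<Rightarrow> 'a \<Rightarrow> bool" where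
  "core_invertible s a \<longleftrightarrow> (\<exists>x. core_inverse s a x)"

definition inv13 :: "('a::ring_1 \<Rightarrow> 'a) \<Rightarrow> 'a \<Rightarrow> 'a \<Rightarrow> bool" where
  "inv13 s a x \<longleftrightarrow> a * x * a = a \<and> s (a * x) = a * x"

end

theory Submission
  imports Defs
begin

lemma rideal_sub: "rideal x \<subseteq> rideal (y::'a::ring_1) \<longleftrightarrow> (\<exists>r. x = y * r)"
proof
  assume "rideal x \<subseteq> rideal y"
  moreover have "x \<in> rideal x" unfolding rideal_def by (metis (mono_tags, lifting) mem_Collect_eq mult.right_neutral)
  ultimately show "\<exists>r. x = y * r" unfolding rideal_def by blast
next
  assume "\<exists>r. x = y * r"
  then obtain r where "x = y * r" by blast
  then show "rideal x \<subseteq> rideal y" unfolding rideal_def by (auto simp: mult.assoc)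
qed
lemma lideal_sub: "lideal x \<subseteq> lideal (y::'a::ring_1) \<longleftrightarrow> (\<exists>r. x = r * y)"
proof
  assume "lideal x \<subseteq> lideal y"
  moreover have "x \<in> lideal x" unfolding lideal_def by (metis (mono_tags, lifting) mem_Collect_eq mult.left_neutral)
  ultimately show "\<exists>r. x = r * y" unfolding lideal_def by blast
next
  assume "\<exists>r. x = r * y"
  then obtain r where "x = r * y" by blast
  then show "lideal x \<subseteq> lideal y" unfolding lideal_def by (auto simp: mult.assoc[symmetric])
qed

lemma two_imp_one:
  fixes s :: "'a::ring_1 \<Rightarrow> 'a" and a b :: 'a
  assumes inv: "involution s" and w: "a = a * a * w"
    and h1: "b * a * a = a" and h2: "s (a * b) = a * b" and v: "b = a * v"
  shows "core_inverse s a b"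
proof -
  have sm: "\<And>x y. s (x * y) = s y * s x" and ss: "\<And>x. s (s x) = x"
    using inv unfolding involution_def by auto
  have aba: "a * b * a = a"
  proof -
    have "a * b * a = a * (b * a * a) * w" using w by (metis mult.assoc)
    also have "\<dots> = a" using h1 w by simp
    finally show ?thesis .
  qed
  have bab: "b * a * b = b"
  proof -
    have "b * a * b = (b * a * a) * v" using v by (simp add: mult.assoc)
    also have "\<dots> = b" using h1 v by simp
    finally show ?thesis .
  qed
  have "rideal b \<subseteq> rideal a" using rideal_sub[of b a] v by blast
  moreover have "a = b * (a * a)" using h1 by (simp add: mult.assoc)
  then have "rideal a \<subseteq> rideal b" using rideal_sub[of a b] by blast
  ultimately have "rideal b = rideal a" by blast
  moreover have "b = b * s b * s a"
  proof -
    have "b = b * (a * b)" using bab by (simp add: mult.assoc)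
    also have "\<dots> = b * s b * s a" by (metis h2 sm mult.assoc)
    finally show ?thesis .
  qed
  moreover have "s a = s a * a * b"
  proof -
    have "s a = s (a * b * a)" using aba by simp
    also have "\<dots> = s a * s (a * b)" by (simp add: sm mult.assoc)
    also have "\<dots> = s a * a * b" using h2 by (simp add: mult.assoc)
    finally show ?thesis .
  qed
  ultimately have r: "rideal b = rideal a" and l1: "b = (b * s b) * s a" and l2: "s a = (s a * a) * b"
    by auto
  have "lideal b \<subseteq> lideal (s a)" using lideal_sub[of b "s a"] l1 by blast
  moreover have "lideal (s a) \<subseteq> lideal b" using lideal_sub[of "s a" b] l2 by blast
  ultimately have "lideal b = lideal (s a)" by blast
  then show ?thesis unfolding core_inverse_def using aba r by blast
qed

theorem proposition3p11:
  fixes s :: "'a::ring_1 \<Rightarrow> 'a" and a b :: 'a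
  assumes "involution s"
    and "rideal a = rideal (a * a)"
  shows "(core_invertible s a \<and> core_inverse s a b
          \<longleftrightarrow> b * a * a = a \<and> s (a * b) = a * b \<and> rideal b \<subseteq> rideal a)
       \<and> (core_invertible s a \<and> core_inverse s a b
          \<longleftrightarrow> (\<exists>x. inv13 s a x) \<and> b * a * a = a \<and> (\<exists>x. inv13 s a x \<and> b = b * a * x))"
proof -
  have sm: "\<And>x y. s (x * y) = s y * s x" and ss: "\<And>x. s (s x) = x"
    using assms(1) unfolding involution_def by auto
  obtain w where w: "a = a * a * w"
    using assms(2) rideal_sub[of a "a*a"] by auto
  have one_two: "b * a * a = a \<and> s (a * b) = a * b \<and> b * a * b = b \<and> rideal b \<subseteq> rideal a"
    if c: "core_inverse s a b"
  proof -
    have aba: "a * b * a = a" and rb: "rideal b = rideal a" and lb: "lideal b = lideal (s a)"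
      using c unfolding core_inverse_def by auto
    obtain v where v: "b = a * v" using rb rideal_sub[of b a] by auto
    obtain u where u: "a = b * u" using rb rideal_sub[of a b] by auto
    obtain r where r: "b = r * s a" using lb lideal_sub[of b "s a"] by auto
    have sa: "s a = s a * s (a * b)"
    proof -
      have "s a = s (a * b * a)" using aba by simp
      also have "\<dots> = s a * s (a * b)" by (simp add: sm mult.assoc)
      finally show ?thesis .
    qed
    have b1: "b = b * s (a * b)"
    proof -
      have "b = r * (s a * s (a * b))" using r sa by simp
      also have "\<dots> = b * s (a * b)" using r by (simp add: mult.assoc)
      finally show ?thesis .
    qed
    have ab: "a * b = a * b * s (a * b)" using b1 by (metis mult.assoc)
    have "s (a * b * s (a * b)) = a * b * s (a * b)" by (simp add: sm ss mult.assoc)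
    then have h: "s (a * b) = a * b" using ab by simp
    have bab: "b * a * b = b" using b1 h by (simp add: mult.assoc)
    have "b * a * a = b * a * b * u" using u by (simp add: mult.assoc)
    then have "b * a * a = a" using bab u by simp
    then show ?thesis using h bab rb by auto
  qed
  have P1: "core_invertible s a \<and> core_inverse s a b
          \<longleftrightarrow> b * a * a = a \<and> s (a * b) = a * b \<and> rideal b \<subseteq> rideal a"
  proof
    assume "core_invertible s a \<and> core_inverse s a b"
    then show "b * a * a = a \<and> s (a * b) = a * b \<and> rideal b \<subseteq> rideal a" using one_two by auto
  next
    assume h: "b * a * a = a \<and> s (a * b) = a * b \<and> rideal b \<subseteq> rideal a"
    then obtain v where "b = a * v" using rideal_sub[of b a] by auto
    then have "core_inverse s a b" using two_imp_one[OF assms(1) w] h by auto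
    then show "core_invertible s a \<and> core_inverse s a b" unfolding core_invertible_def by auto
  qed
  have P2: "core_invertible s a \<and> core_inverse s a b
          \<longleftrightarrow> (\<exists>x. inv13 s a x) \<and> b * a * a = a \<and> (\<exists>x. inv13 s a x \<and> b = b * a * x)"
  proof
    assume "core_invertible s a \<and> core_inverse s a b"
    then have c: "core_inverse s a b" by auto
    then have aba: "a * b * a = a" unfolding core_inverse_def by auto
    from one_two[OF c] have "inv13 s a b" "b * a * a = a" "b = b * a * b"
      using aba unfolding inv13_def by auto
    then show "(\<exists>x. inv13 s a x) \<and> b * a * a = a \<and> (\<exists>x. inv13 s a x \<and> b = b * a * x)" by auto
  next
    assume "(\<exists>x. inv13 s a x) \<and> b * a * a = a \<and> (\<exists>x. inv13 s a x \<and> b = b * a * x)"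
    then obtain x where h1: "b * a * a = a" and x: "inv13 s a x" and bx: "b = b * a * x" by auto
    have axa: "a * x * a = a" and sx: "s (a * x) = a * x" using x unfolding inv13_def by auto
    have aba: "a * b * a = a"
    proof -
      have "a * b * a = a * (b * a * a) * w" using w by (metis mult.assoc)
      also have "\<dots> = a" using h1 w by simp
      finally show ?thesis .
    qed
    have ab: "a * b = a * x"
    proof -
      have "a * b = a * b * a * x" using bx by (metis mult.assoc)
      then show ?thesis using aba by simp
    qed
    have ba: "b * a = a * w"
    proof -
      have "b * a = (b * a * a) * w" using w by (metis mult.assoc)
      then show ?thesis using h1 by simp
    qed
    have bv: "b = a * (w * x)" using ba bx by (simp add: mult.assoc)
    have "core_inverse s a b" using two_imp_one[OF assms(1) w h1 _ bv] ab sx by auto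
    then show "core_invertible s a \<and> core_inverse s a b" unfolding core_invertible_def by auto
  qed
  show ?thesis using P1 P2 by blast
qed

end
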